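(* If \(A\subseteq\operatorname{Homeo}_+(I)\) is a finite geometrically proper set of positive bump functions, then the following are equivalent: (1) \(A\) is geometrically fast; (2) every stretched transition chain \(C\) of \(A\) satisfies \(C_{\max}\le C_{\min}\prod C\); (3) every maximal stretched transition chain \(C\) of \(A\) satisfies \(C_{\max}\le C_{\min}\prod C\).
   Context: \(I=[0,1]\); homeomorphisms act on the right (\(tg\) is the image of \(t\); \(fg\) means apply \(f\) first). A positive bump is an element of \(\operatorname{Homeo}_+(I)\) whose support \(\{t: ta\neq t\}\) is a single open interval \((x,y)\) on which \(ta>t\); its transition points are \(x\) (left) and \(y\) (right). A transition point of \(A\) is one of some element of \(A\). \(A\) is geometrically proper if no point is a left transition point of two distinct elements, nor a right transition point of two distinct elements. A marking of \(A\) assigns each \(a\) a marker \(t\in\operatorname{supt}(a)\); for \(a\) with support \((x,y)\) its feet are \((x,t)\) and \([ta,y)\). \(A\) is geometrically fast if geometrically proper and some marking makes all feet pairwise disjoint. An element of \(A\) is isolated if its support contains no transition point of \(A\). A sequence \(C=(a_i\mid i\le k)\) of nonisolated elements of \(A\), \(\operatorname{supt}(a_i)=(x_i,y_i)\), is a stretched transition chain if for all \(i<k\), \(x_i<x_{i+1}<y_i<y_{i+1}\), and no transition point of \(A\) lies in any \((x_{i+1},y_i)\); maximal means maximal under containment as a subset of \(A\). \(\prod C=a_0a_1\cdots a_k\); \(C_{\min}\) (resp. \(C_{\max}\)) is the least (resp. greatest) transition point of \(A\) lying in the union of the supports of the elements of \(C\). *)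

theory Defs
  imports Complex_Main
begin

text \<open>Homeomorphisms act on the right: t g is written g t. The composite f g (apply f
first) is the function g \<circ> f. Elements of Homeo_+(I) are represented as functions
real \<Rightarrow> real that are the identity outside I = [0,1].\<close>

definition homeo_plus :: "(real \<Rightarrow> real) \<Rightarrow> bool" where
  "homeo_plus f \<longleftrightarrow> bij_betw f {0..1} {0..1} \<and> continuous_on {0..1} f
     \<and> strict_mono_on {0..1} f \<and> (\<forall>x. x \<notin> {0..1} \<longrightarrow> f x = x)"

definition supt :: "(real \<Rightarrow> real) \<Rightarrow> real set" where
  "supt f = {t. f t \<noteq> t}"

definition positive_bump :: "(real \<Rightarrow> real) \<Rightarrow> bool" where
  "positive_bump a \<longleftrightarrow> homeo_plus a \<and>
     (\<exists>x y. x < y \<and> supt a = {x<..<y} \<and> (\<forall>t\<in>{x<..<y}. a t > t))"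

definition left_tp :: "(real \<Rightarrow> real) \<Rightarrow> real" where
  "left_tp a = Inf (supt a)"

definition right_tp :: "(real \<Rightarrow> real) \<Rightarrow> real" where
  "right_tp a = Sup (supt a)"

definition trans_points :: "(real \<Rightarrow> real) set \<Rightarrow> real set" where
  "trans_points A = left_tp ` A \<union> right_tp ` A"

definition geom_proper :: "(real \<Rightarrow> real) set \<Rightarrow> bool" where
  "geom_proper A \<longleftrightarrow>
     (\<forall>a\<in>A. \<forall>b\<in>A. left_tp a = left_tp b \<longrightarrow> a = b) \<and>
     (\<forall>a\<in>A. \<forall>b\<in>A. right_tp a = right_tp b \<longrightarrow> a = b)"

definition left_foot :: "((real \<Rightarrow> real) \<Rightarrow> real) \<Rightarrow> (real \<Rightarrow> real) \<Rightarrow> real set" where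
  "left_foot m a = {left_tp a<..<m a}"

definition right_foot :: "((real \<Rightarrow> real) \<Rightarrow> real) \<Rightarrow> (real \<Rightarrow> real) \<Rightarrow> real set" where
  "right_foot m a = {a (m a)..<right_tp a}"

definition geom_fast :: "(real \<Rightarrow> real) set \<Rightarrow> bool" where
  "geom_fast A \<longleftrightarrow> geom_proper A \<and>
     (\<exists>m. (\<forall>a\<in>A. m a \<in> supt a) \<and>
        (\<forall>a\<in>A. \<forall>b\<in>A.
           left_foot m a \<inter> right_foot m b = {} \<and>
           (a \<noteq> b \<longrightarrow> left_foot m a \<inter> left_foot m b = {}) \<and>
           (a \<noteq> b \<longrightarrow> right_foot m a \<inter> right_foot m b = {})))"

definition isolated :: "(real \<Rightarrow> real) set \<Rightarrow> (real \<Rightarrow> real) \<Rightarrow> bool" where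
  "isolated A a \<longleftrightarrow> supt a \<inter> trans_points A = {}"

definition stretched_chain :: "(real \<Rightarrow> real) set \<Rightarrow> (real \<Rightarrow> real) list \<Rightarrow> bool" where
  "stretched_chain A C \<longleftrightarrow> C \<noteq> [] \<and> (\<forall>a\<in>set C. a \<in> A \<and> \<not> isolated A a) \<and>
     (\<forall>i. Suc i < length C \<longrightarrow>
        left_tp (C!i) < left_tp (C!Suc i) \<and> left_tp (C!Suc i) < right_tp (C!i) \<and>
        right_tp (C!i) < right_tp (C!Suc i) \<and>
        trans_points A \<inter> {left_tp (C!Suc i)<..<right_tp (C!i)} = {})"

definition max_stretched_chain :: "(real \<Rightarrow> real) set \<Rightarrow> (real \<Rightarrow> real) list \<Rightarrow> bool" where
  "max_stretched_chain A C \<longleftrightarrow> stretched_chain A C \<and>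
     (\<forall>D. stretched_chain A D \<and> set C \<subseteq> set D \<longrightarrow> set D = set C)"

text \<open>\<Prod>C = a_0 a_1 ... a_k: apply a_0 first, then a_1, etc.\<close>
definition chain_prod :: "(real \<Rightarrow> real) list \<Rightarrow> (real \<Rightarrow> real)" where
  "chain_prod C = foldl (\<lambda>f a. a \<circ> f) id C"

definition chain_min :: "(real \<Rightarrow> real) set \<Rightarrow> (real \<Rightarrow> real) list \<Rightarrow> real" where
  "chain_min A C = Min (trans_points A \<inter> (\<Union>a\<in>set C. supt a))"

definition chain_max :: "(real \<Rightarrow> real) set \<Rightarrow> (real \<Rightarrow> real) list \<Rightarrow> real" where
  "chain_max A C = Max (trans_points A \<inter> (\<Union>a\<in>set C. supt a))"

end

theory Submission
  imports Defs
begin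

lemma bump_facts:
  assumes "positive_bump a"
  shows "supt a = {left_tp a<..<right_tp a}" "left_tp a < right_tp a"
    "\<And>t. t \<in> supt a \<Longrightarrow> a t > t" "\<And>t. t \<notin> supt a \<Longrightarrow> a t = t"
    "strict_mono a"
proof -
  obtain x y where xy: "x < y" "supt a = {x<..<y}" "\<forall>t\<in>{x<..<y}. a t > t"
    and h: "homeo_plus a" using assms unfolding positive_bump_def by blast
  have lx: "left_tp a = x" unfolding left_tp_def using xy by simp
  have ry: "right_tp a = y" unfolding right_tp_def using xy by simp
  show "supt a = {left_tp a<..<right_tp a}" "left_tp a < right_tp a" using xy lx ry by auto
  show pos: "\<And>t. t \<in> supt a \<Longrightarrow> a t > t" using xy by auto
  show fx: "\<And>t. t \<notin> supt a \<Longrightarrow> a t = t" unfolding supt_def by auto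
  have ge: "a t \<ge> t" for t using pos[of t] fx[of t] by (cases "t \<in> supt a") auto
  have bij: "bij_betw a {0..1} {0..1}" and sm: "strict_mono_on {0..1} a"
    and out: "\<forall>x. x \<notin> {0..1} \<longrightarrow> a x = x" using h unfolding homeo_plus_def by (meson conjE)+
  have img: "t \<in> {0..1} \<Longrightarrow> a t \<in> {0..1}" for t using bij by (rule bij_betw_apply)
  show "strict_mono a"
  proof (rule strict_monoI)
    fix s t :: real assume st: "s < t"
    show "a s < a t"
    proof (cases "s \<in> {0..1}")
      case True
      show ?thesis
      proof (cases "t \<in> {0..1}")
        case True with \<open>s \<in> {0..1}\<close> st sm show ?thesis by (simp add: strict_mono_onD)
      next
        case False
        then have "t > 1" using st True by auto
        have "a t = t" using out False by blast
        moreover have "a s \<le> 1" using img[OF True] by simp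
        ultimately show ?thesis using \<open>t > 1\<close> by linarith
      qed
    next
      case False
      then have "a s = s" using out by blast
      then show ?thesis using ge[of t] st by auto
    qed
  qed
qed

lemma disj_LR:
  fixes T :: "real set"
  assumes "xa<ta" "ta<ua" "ua<ya" "xb<tb" "tb<ub" "ub<yb" "xa\<in>T" "ya\<in>T" "xb\<in>T" "yb\<in>T"
   "T \<inter> {xa<..<ta} = {}" "T \<inter> {ub<..<yb} = {}"
   "\<lbrakk>xb<xa; xa<yb; yb<ya; T \<inter> {xa<..<yb} = {}\<rbrakk> \<Longrightarrow> ta \<le> ub"
   "xa \<noteq> xb" "ya \<noteq> yb"
  shows "{xa<..<ta} \<inter> {ub..<yb} = {}"
proof (rule ccontr)
  assume "\<not> ?thesis"
  then obtain z where z: "xa < z" "z < ta" "ub \<le> z" "z < yb" by auto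
  have yb: "ta \<le> yb"
  proof (rule ccontr)
    assume "\<not> ta \<le> yb" then have "yb \<in> T \<inter> {xa<..<ta}" using z assms by auto
    then show False using assms by blast
  qed
  have xb: "xb < xa"
  proof (rule ccontr)
    assume "\<not> xb < xa" then have "xb \<in> T \<inter> {xa<..<ta}" using z assms by auto
    then show False using assms by blast
  qed
  have fr: "T \<inter> {xa<..<yb} = {}"
  proof (rule ccontr)
    assume "\<not> ?thesis"
    then obtain p where p: "p \<in> T" "xa < p" "p < yb" by auto
    show False
    proof (cases "p < ta")
      case True then have "p \<in> T \<inter> {xa<..<ta}" using p by auto
      then show False using assms by blast
    next
      case False then have "p \<in> T \<inter> {ub<..<yb}" using p z by auto
      then show False using assms by blast
    qed
  qed
  have "yb < ya"
  proof (rule ccontr)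
    assume "\<not> yb < ya" then have "ya < yb" using assms by auto
    then have "ya \<in> T \<inter> {xa<..<yb}" using assms by auto
    then show False using fr by blast
  qed
  then have "ta \<le> ub" using assms(13) xb z fr by auto
  then show False using z by auto
qed

lemma disj_LL:
  fixes T :: "real set"
  assumes "xa \<noteq> xb" "xa<ta" "xb<tb" "T \<inter> {xa<..<ta} = {}" "T \<inter> {xb<..<tb} = {}" "xa\<in>T" "xb\<in>T"
  shows "{xa<..<ta} \<inter> {xb<..<tb} = {}"
proof (rule ccontr)
  assume "\<not> ?thesis"
  then obtain z where "z \<in> {xa<..<ta} \<inter> {xb<..<tb}" by blast
  then have z: "xa < z" "z < ta" "xb < z" "z < tb" by auto
  show False
  proof (cases "xa < xb")
    case True then have "xb \<in> T \<inter> {xa<..<ta}" using z assms by auto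
    then show False using assms by blast
  next
    case False then have "xa \<in> T \<inter> {xb<..<tb}" using z assms by auto
    then show False using assms by blast
  qed
qed

lemma disj_RR:
  fixes T :: "real set"
  assumes "ya \<noteq> yb" "ua<ya" "ub<yb" "T \<inter> {ua<..<ya} = {}" "T \<inter> {ub<..<yb} = {}" "ya\<in>T" "yb\<in>T"
  shows "{ua..<ya} \<inter> {ub..<yb} = {}"
proof (rule ccontr)
  assume "\<not> ?thesis"
  then obtain z where "z \<in> {ua..<ya} \<inter> {ub..<yb}" by blast
  then have z: "ua \<le> z" "z < ya" "ub \<le> z" "z < yb" by auto
  show False
  proof (cases "ya < yb")
    case True then have "ya \<in> T \<inter> {ub<..<yb}" using z assms by auto
    then show False using assms by blast
  next
    case False then have "yb \<in> T \<inter> {ua<..<ya}" using z assms by auto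
    then show False using assms by blast
  qed
qed

locale bumps =
  fixes A :: "(real \<Rightarrow> real) set"
  assumes fin: "finite A" and pb: "\<forall>a\<in>A. positive_bump a" and gp: "geom_proper A"
begin

abbreviation "TP \<equiv> trans_points A"

lemma finT: "finite TP"
  unfolding trans_points_def using fin by simp

lemma bf:
  assumes "a \<in> A"
  shows "supt a = {left_tp a<..<right_tp a}" "left_tp a < right_tp a"
    "\<And>t. t \<in> supt a \<Longrightarrow> a t > t" "\<And>t. t \<notin> supt a \<Longrightarrow> a t = t"
    "strict_mono a"
  using bump_facts[of a] pb assms by auto

lemma supt_iff: "a \<in> A \<Longrightarrow> t \<in> supt a \<longleftrightarrow> left_tp a < t \<and> t < right_tp a"
  using bf(1) by auto

lemma LT: "a \<in> A \<Longrightarrow> left_tp a \<in> TP" and RT: "a \<in> A \<Longrightarrow> right_tp a \<in> TP"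
  unfolding trans_points_def by auto

lemma TP_cases: "p \<in> TP \<Longrightarrow> (\<And>b. b \<in> A \<Longrightarrow> p = left_tp b \<or> p = right_tp b \<Longrightarrow> Q) \<Longrightarrow> Q"
  unfolding trans_points_def by auto

lemma fixR: "a \<in> A \<Longrightarrow> a (right_tp a) = right_tp a"
  using bf(4) supt_iff by auto

lemma fix_below: "a \<in> A \<Longrightarrow> t \<le> left_tp a \<Longrightarrow> a t = t"
  using bf(4) supt_iff by auto

lemma mono_a: "a \<in> A \<Longrightarrow> s \<le> t \<Longrightarrow> a s \<le> a t"
  using bf(5) by (metis order_le_less strict_mono_less)

lemma img_lt: "a \<in> A \<Longrightarrow> t \<in> supt a \<Longrightarrow> a t < right_tp a"
  using bf(5) fixR supt_iff by (metis strict_mono_less)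

lemma img_supt: "a \<in> A \<Longrightarrow> t \<in> supt a \<Longrightarrow> a t \<in> supt a"
  using img_lt bf(3) supt_iff by fastforce

lemma chain_mono:
  assumes "stretched_chain A C" "i < j" "j < length C"
  shows "left_tp (C!i) < left_tp (C!j) \<and> right_tp (C!i) < right_tp (C!j)"
  using assms(2,3)
proof (induction j)
  case 0 then show ?case by simp
next
  case (Suc j)
  have s: "left_tp (C!j) < left_tp (C!Suc j) \<and> right_tp (C!j) < right_tp (C!Suc j)"
    using assms(1) Suc.prems unfolding stretched_chain_def by auto
  show ?case
  proof (cases "i = j")
    case True then show ?thesis using s by simp
  next
    case False then show ?thesis using Suc s by auto
  qed
qed

lemma chain_le:
  assumes "stretched_chain A C" "i \<le> j" "j < length C"
  shows "left_tp (C!i) \<le> left_tp (C!j) \<and> right_tp (C!i) \<le> right_tp (C!j)"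
  using chain_mono[OF assms(1) _ assms(3), of i] assms(2) by (cases "i = j") auto

lemma chain_A: "stretched_chain A C \<Longrightarrow> i < length C \<Longrightarrow> C!i \<in> A"
  unfolding stretched_chain_def by auto

lemma chain_noniso: "stretched_chain A C \<Longrightarrow> i < length C \<Longrightarrow> \<not> isolated A (C!i)"
  unfolding stretched_chain_def by auto

lemma chain_step:
  assumes "stretched_chain A C" "Suc i < length C"
  shows "left_tp (C!i) < left_tp (C!Suc i)" "left_tp (C!Suc i) < right_tp (C!i)"
    "right_tp (C!i) < right_tp (C!Suc i)"
    "TP \<inter> {left_tp (C!Suc i)<..<right_tp (C!i)} = {}"
  using assms unfolding stretched_chain_def by auto

lemma chain_prod_Suc:
  "j < length C \<Longrightarrow> chain_prod (take (Suc j) C) x = (C!j) (chain_prod (take j C) x)"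
  unfolding chain_prod_def by (simp add: take_Suc_conv_app_nth)

lemma chain_prod_0: "chain_prod (take 0 C) x = x"
  unfolding chain_prod_def by simp

definition SC :: "(real \<Rightarrow> real) list \<Rightarrow> real set" where
  "SC C = TP \<inter> (\<Union>a\<in>set C. supt a)"

lemma SC_fin: "finite (SC C)"
  unfolding SC_def using finT by simp

lemma SC_ne: assumes "stretched_chain A C" shows "SC C \<noteq> {}"
proof -
  have "C \<noteq> []" using assms unfolding stretched_chain_def by simp
  then have "\<not> isolated A (C!0)" using chain_noniso[OF assms] by simp
  then obtain p where "p \<in> supt (C!0)" "p \<in> TP" unfolding isolated_def by auto
  moreover have "C!0 \<in> set C" using \<open>C \<noteq> []\<close> by simp
  ultimately show ?thesis unfolding SC_def by blast
qed

lemma SC_iff: "p \<in> SC C \<longleftrightarrow> p \<in> TP \<and> (\<exists>i<length C. p \<in> supt (C!i))"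
  unfolding SC_def by (auto simp: in_set_conv_nth) (metis nth_mem)

lemma cmin: assumes "stretched_chain A C"
  shows "chain_min A C \<in> SC C" "\<And>p. p \<in> SC C \<Longrightarrow> chain_min A C \<le> p"
  unfolding chain_min_def SC_def[symmetric] using SC_fin SC_ne[OF assms] by auto

lemma cmax: assumes "stretched_chain A C"
  shows "chain_max A C \<in> SC C" "\<And>p. p \<in> SC C \<Longrightarrow> p \<le> chain_max A C"
  unfolding chain_max_def SC_def[symmetric] using SC_fin SC_ne[OF assms] by auto


lemma fast_tl:
  assumes mk: "\<forall>a\<in>A. m a \<in> supt a"
   and dj: "\<forall>a\<in>A. \<forall>b\<in>A. left_foot m a \<inter> right_foot m b = {} \<and>
           (a \<noteq> b \<longrightarrow> left_foot m a \<inter> left_foot m b = {}) \<and>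
           (a \<noteq> b \<longrightarrow> right_foot m a \<inter> right_foot m b = {})"
   and a: "a \<in> A" and p: "p \<in> TP" "p \<in> supt a"
  shows "m a \<le> p \<and> p \<le> a (m a)"
proof -
  have ma: "left_tp a < m a" "m a < right_tp a" using mk a supt_iff by auto
  have ua: "m a < a (m a)" "a (m a) < right_tp a" using mk a bf(3) img_lt by auto
  have pa: "left_tp a < p" "p < right_tp a" using p a supt_iff by auto
  obtain b where b: "b \<in> A" "p = left_tp b \<or> p = right_tp b" using p(1) TP_cases by blast
  have mb: "left_tp b < m b" "m b < right_tp b" using mk b supt_iff by auto
  have ub: "m b < b (m b)" "b (m b) < right_tp b" using mk b bf(3) img_lt by auto
  have ab: "a \<noteq> b" using b pa by auto
  have d: "left_foot m a \<inter> right_foot m b = {}" "left_foot m b \<inter> right_foot m a = {}"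
    "left_foot m a \<inter> left_foot m b = {}" "right_foot m a \<inter> right_foot m b = {}"
    using dj a b(1) ab by auto
  have "m a \<le> p"
  proof (rule ccontr)
    assume c: "\<not> m a \<le> p"
    show False
    proof (cases "p = left_tp b")
      case True
      define z where "z = (p + min (m a) (m b)) / 2"
      have "z \<in> left_foot m a \<inter> left_foot m b"
        unfolding left_foot_def z_def using True c pa mb by auto
      then show False using d by blast
    next
      case False
      then have pr: "p = right_tp b" using b by auto
      define z where "z = (max (left_tp a) (b (m b)) + p) / 2"
      have "z \<in> left_foot m a \<inter> right_foot m b"
        unfolding left_foot_def right_foot_def z_def using pr c pa ub by auto
      then show False using d by blast
    qed
  qed
  moreover have "p \<le> a (m a)"
  proof (rule ccontr)
    assume c: "\<not> p \<le> a (m a)"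
    show False
    proof (cases "p = left_tp b")
      case True
      define z where "z = (p + min (right_tp a) (m b)) / 2"
      have "z \<in> left_foot m b \<inter> right_foot m a"
        unfolding left_foot_def right_foot_def z_def using True c pa mb by auto
      then show False using d by blast
    next
      case False
      then have pr: "p = right_tp b" using b by auto
      define z where "z = (max (a (m a)) (b (m b)) + p) / 2"
      have "z \<in> right_foot m a \<inter> right_foot m b"
        unfolding left_foot_def right_foot_def z_def using pr c pa ub by auto
      then show False using d by blast
    qed
  qed
  ultimately show ?thesis by simp
qed

lemma fast_chain:
  assumes mk: "\<forall>a\<in>A. m a \<in> supt a"
   and dj: "\<forall>a\<in>A. \<forall>b\<in>A. left_foot m a \<inter> right_foot m b = {} \<and>
           (a \<noteq> b \<longrightarrow> left_foot m a \<inter> left_foot m b = {}) \<and>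
           (a \<noteq> b \<longrightarrow> right_foot m a \<inter> right_foot m b = {})"
   and C: "stretched_chain A C"
  shows "chain_max A C \<le> chain_prod C (chain_min A C)"
proof -
  note tl = fast_tl[OF mk dj]
  define n where "n = length C"
  have n0: "n > 0" using C unfolding stretched_chain_def n_def by simp
  have CA: "\<And>i. i < n \<Longrightarrow> C!i \<in> A" using chain_A[OF C] n_def by simp
  have consec: "m (C!Suc i) \<le> (C!i) (m (C!i))" if i: "Suc i < n" for i
  proof (rule ccontr)
    assume c: "\<not> ?thesis"
    have s: "left_tp (C!i) < left_tp (C!Suc i)" "left_tp (C!Suc i) < right_tp (C!i)"
      "right_tp (C!i) < right_tp (C!Suc i)" using chain_step[OF C] i n_def by auto
    have A1: "C!i \<in> A" "C!Suc i \<in> A" using CA i by auto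
    have "left_tp (C!Suc i) \<le> (C!i) (m (C!i))"
      using tl[OF A1(1) LT[OF A1(2)]] s supt_iff[OF A1(1)] by auto
    moreover have "m (C!Suc i) \<le> right_tp (C!i)"
      using tl[OF A1(2) RT[OF A1(1)]] s supt_iff[OF A1(2)] by auto
    moreover have "left_tp (C!Suc i) < m (C!Suc i)" using mk A1 supt_iff by auto
    ultimately have "(max (left_tp (C!Suc i)) ((C!i) (m (C!i))) + m (C!Suc i)) / 2
        \<in> left_foot m (C!Suc i) \<inter> right_foot m (C!i)"
      using c unfolding left_foot_def right_foot_def by auto
    then show False using dj A1 by blast
  qed
  define mn where "mn = chain_min A C"
  define Q where "Q j = chain_prod (take j C) mn" for j
  have Q0: "m (C!0) \<le> Q 0"
  proof -
    have "mn \<in> SC C" using cmin[OF C] mn_def by simp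
    then obtain i where i: "i < n" "mn \<in> supt (C!i)" "mn \<in> TP" using SC_iff n_def by auto
    show ?thesis
    proof (cases "i = 0")
      case True then show ?thesis using tl[of "C!0" mn] i CA Q_def chain_prod_0 by simp
    next
      case False
      have s: "left_tp (C!0) < left_tp (C!1)" "left_tp (C!1) < right_tp (C!0)"
        using chain_step[OF C, of 0] i False n_def by auto
      have "left_tp (C!1) \<le> left_tp (C!i)" using chain_le[OF C, of 1 i] i False n_def by auto
      moreover have "left_tp (C!i) < mn" using i supt_iff CA by auto
      moreover have "m (C!0) \<le> left_tp (C!1)"
        using tl[of "C!0" "left_tp (C!1)"] CA[of 0] CA[of 1] LT s supt_iff i False n0 by auto
      ultimately show ?thesis using Q_def chain_prod_0 by simp
    qed
  qed
  have Qj: "m (C!j) \<le> Q j" if "j < n" for j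
    using that
  proof (induction j)
    case 0 then show ?case using Q0 by simp
  next
    case (Suc j)
    have "Q (Suc j) = (C!j) (Q j)" using chain_prod_Suc Suc.prems Q_def n_def by simp
    also have "\<dots> \<ge> (C!j) (m (C!j))" using mono_a CA Suc by simp
    finally show ?case using consec[of j] Suc.prems by simp
  qed
  define k where "k = n - 1"
  have k: "k < n" "Suc k = n" using n0 k_def by auto
  have fin: "chain_prod C mn = (C!k) (Q k)"
    using chain_prod_Suc[of k C mn] k Q_def n_def by simp
  have "(C!k) (m (C!k)) \<le> chain_prod C mn" using fin mono_a CA Qj k by simp
  moreover have "chain_max A C \<le> (C!k) (m (C!k))"
  proof -
    have "chain_max A C \<in> SC C" using cmax[OF C] by simp
    then obtain i where i: "i < n" "chain_max A C \<in> supt (C!i)" "chain_max A C \<in> TP"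
      using SC_iff n_def by auto
    show ?thesis
    proof (cases "i = k")
      case True then show ?thesis using tl[of "C!k"] i CA by simp
    next
      case False
      then have ik: "i < k" using i k by auto
      then obtain k' where k': "k = Suc k'" by (cases k) auto
      have s: "left_tp (C!Suc k') < right_tp (C!k')" "right_tp (C!k') < right_tp (C!Suc k')"
        using chain_step[OF C, of k'] k k' n_def by auto
      have "right_tp (C!i) \<le> right_tp (C!k')" using chain_le[OF C, of i k'] ik k' k n_def by auto
      moreover have "chain_max A C < right_tp (C!i)" using i supt_iff CA by auto
      moreover have "right_tp (C!k') \<le> (C!k) (m (C!k))"
        using tl[of "C!k" "right_tp (C!k')"] CA k k' RT s supt_iff by auto
      ultimately show ?thesis by simp
    qed
  qed
  ultimately show ?thesis using mn_def by simp
qed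


definition predr :: "(real \<Rightarrow> real) \<Rightarrow> (real \<Rightarrow> real) \<Rightarrow> bool" where
  "predr b a \<longleftrightarrow> left_tp b < left_tp a \<and> left_tp a < right_tp b \<and> right_tp b < right_tp a \<and>
     TP \<inter> {left_tp a<..<right_tp b} = {}"

lemma pred_unique:
  assumes "a \<in> A" "b \<in> A" "b' \<in> A" "predr b a" "predr b' a" shows "b = b'"
proof (rule ccontr)
  assume ne: "b \<noteq> b'"
  then have "right_tp b \<noteq> right_tp b'" using gp assms unfolding geom_proper_def by blast
  then consider "right_tp b < right_tp b'" | "right_tp b' < right_tp b" by linarith
  then show False
  proof cases
    case 1
    have "right_tp b \<in> TP \<inter> {left_tp a<..<right_tp b'}" using 1 RT[OF assms(2)] assms(4) predr_def by auto
    then show False using assms(5) predr_def by blast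
  next
    case 2
    have "right_tp b' \<in> TP \<inter> {left_tp a<..<right_tp b}" using 2 RT[OF assms(3)] assms(5) predr_def by auto
    then show False using assms(4) predr_def by blast
  qed
qed

lemma chain_pred: "stretched_chain A D \<Longrightarrow> Suc i < length D \<Longrightarrow> predr (D!i) (D!Suc i)"
  using chain_step[of D i] unfolding predr_def by auto

lemma max_first:
  assumes D: "max_stretched_chain A D" and b: "b \<in> A" "predr b (D!0)" shows False
proof -
  have Ds: "stretched_chain A D" using D max_stretched_chain_def by auto
  have Dne: "D \<noteq> []" using Ds stretched_chain_def by auto
  have D0: "D!0 \<in> A" using chain_A[OF Ds] Dne by auto
  have niso: "\<not> isolated A b"
  proof -
    have "left_tp (D!0) \<in> supt b \<inter> TP" using b supt_iff LT D0 predr_def by auto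
    then show ?thesis unfolding isolated_def by auto
  qed
  have c2: "\<forall>a\<in>set (b # D). a \<in> A \<and> \<not> isolated A a" using Ds b niso unfolding stretched_chain_def by auto
  have c3: "left_tp ((b # D) ! i) < left_tp ((b # D) ! Suc i) \<and>
        left_tp ((b # D) ! Suc i) < right_tp ((b # D) ! i) \<and>
        right_tp ((b # D) ! i) < right_tp ((b # D) ! Suc i) \<and>
        TP \<inter> {left_tp ((b # D) ! Suc i)<..<right_tp ((b # D) ! i)} = {}"
    if i: "Suc i < length (b # D)" for i
  proof (cases i)
    case 0 then show ?thesis using b predr_def by auto
  next
    case (Suc i') then show ?thesis using i chain_step[OF Ds, of i'] by auto
  qed
  have "stretched_chain A (b # D)" unfolding stretched_chain_def using c2 c3 by blast
  moreover have "set D \<subseteq> set (b # D)" by auto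
  ultimately have "set (b # D) = set D" using D unfolding max_stretched_chain_def by blast
  then have "b \<in> set D" by auto
  then obtain j where j: "j < length D" "D!j = b" by (auto simp: in_set_conv_nth)
  have "left_tp (D!0) \<le> left_tp (D!j)" using chain_le[OF Ds, of 0 j] j by auto
  then show False using j b predr_def by auto
qed

lemma agree:
  assumes D: "max_stretched_chain A D" and D': "max_stretched_chain A D'"
  shows "i < length D \<Longrightarrow> j < length D' \<Longrightarrow> D!i = D'!j \<Longrightarrow> i = j \<and> take (Suc i) D = take (Suc j) D'"
proof (induction i arbitrary: j)
  have Ds: "stretched_chain A D" "stretched_chain A D'" using D D' max_stretched_chain_def by auto
  {
    case 0
    have "j = 0"
    proof (rule ccontr)
      assume "j \<noteq> 0"
      then obtain j' where j': "j = Suc j'" by (cases j) auto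
      have "predr (D'!j') (D!0)" using chain_pred[OF Ds(2), of j'] j' 0 by auto
      then show False using max_first[OF D] chain_A[OF Ds(2), of j'] 0 j' by auto
    qed
    then show ?case using 0 by (simp add: take_Suc_conv_app_nth)
  next
    case (Suc i)
    have "j \<noteq> 0"
    proof
      assume j0: "j = 0"
      have "predr (D!i) (D'!0)" using chain_pred[OF Ds(1), of i] j0 Suc by auto
      then show False using max_first[OF D'] chain_A[OF Ds(1), of i] Suc by auto
    qed
    then obtain j' where j': "j = Suc j'" by (cases j) auto
    have "D!i = D'!j'"
      using pred_unique[of "D!Suc i" "D!i" "D'!j'"] chain_pred[OF Ds(1), of i] chain_pred[OF Ds(2), of j']
        chain_A[OF Ds(1)] chain_A[OF Ds(2)] Suc.prems j' by auto
    then have e: "i = j'" and t: "take (Suc i) D = take (Suc j') D'" using Suc.IH[of j'] Suc.prems j' by auto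
    moreover have "take (Suc (Suc i)) D = take (Suc i) D @ [D!Suc i]"
      using Suc.prems by (simp add: take_Suc_conv_app_nth)
    moreover have "take (Suc (Suc j')) D' = take (Suc j') D' @ [D'!Suc j']"
      using Suc.prems j' by (simp add: take_Suc_conv_app_nth)
    ultimately show ?case using Suc.prems j' e t by simp
  }
qed

lemma cmin_first:
  assumes Ds: "stretched_chain A D"
  shows "chain_min A D \<in> supt (D!0) \<inter> TP" "\<And>p. p \<in> supt (D!0) \<inter> TP \<Longrightarrow> chain_min A D \<le> p"
proof -
  have Dne: "D \<noteq> []" using Ds stretched_chain_def by auto
  have sub: "supt (D!0) \<inter> TP \<subseteq> SC D" using SC_iff Dne by auto
  then show "\<And>p. p \<in> supt (D!0) \<inter> TP \<Longrightarrow> chain_min A D \<le> p" using cmin[OF Ds] by blast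
  obtain i where i: "i < length D" "chain_min A D \<in> supt (D!i)" "chain_min A D \<in> TP"
    using cmin(1)[OF Ds] SC_iff by auto
  have "i = 0"
  proof (rule ccontr)
    assume i0: "i \<noteq> 0"
    have s: "left_tp (D!0) < left_tp (D!1)" "left_tp (D!1) < right_tp (D!0)"
      using chain_step[OF Ds, of 0] i i0 by auto
    have "left_tp (D!1) \<le> left_tp (D!i)" using chain_le[OF Ds, of 1 i] i i0 by auto
    moreover have "left_tp (D!i) < chain_min A D" using i supt_iff chain_A[OF Ds] by auto
    moreover have "left_tp (D!1) \<in> supt (D!0) \<inter> TP"
      using s supt_iff[OF chain_A[OF Ds, of 0]] LT[OF chain_A[OF Ds, of 1]] i i0 Dne by auto
    ultimately show False using sub cmin(2)[OF Ds] by force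
  qed
  then show "chain_min A D \<in> supt (D!0) \<inter> TP" using i by auto
qed

lemma exists_max:
  assumes a: "a \<in> A" "\<not> isolated A a" shows "\<exists>D. max_stretched_chain A D \<and> a \<in> set D"
proof -
  define P where "P y = (\<exists>D. stretched_chain A D \<and> a \<in> set D \<and> card (set D) = y)" for y
  have "stretched_chain A [a]" using a unfolding stretched_chain_def by auto
  then have P1: "P 1" unfolding P_def by (intro exI[of _ "[a]"]) auto
  have bd: "\<forall>y. P y \<longrightarrow> y \<le> card A"
  proof (intro allI impI)
    fix y assume "P y"
    then obtain D where "stretched_chain A D" "card (set D) = y" unfolding P_def by auto
    then have "set D \<subseteq> A" unfolding stretched_chain_def by auto
    then show "y \<le> card A" using card_mono[OF fin] \<open>card (set D) = y\<close> by auto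
  qed
  obtain x where x: "P x" "\<forall>y. P y \<longrightarrow> y \<le> x" using Nat.ex_has_greatest_nat[OF P1 bd] by auto
  then obtain D where D: "stretched_chain A D" "a \<in> set D" "card (set D) = x" unfolding P_def by auto
  have "max_stretched_chain A D"
    unfolding max_stretched_chain_def
  proof (intro conjI allI impI)
    show "stretched_chain A D" by fact
    fix D' assume D': "stretched_chain A D' \<and> set D \<subseteq> set D'"
    then have "P (card (set D'))" unfolding P_def using D by auto
    then have "card (set D') \<le> card (set D)" using x D by auto
    then show "set D' = set D" using D' card_seteq[of "set D'" "set D"] by auto
  qed
  then show ?thesis using D by auto
qed


lemma max_props:
  assumes Ds: "stretched_chain A D" and H: "chain_max A D \<le> chain_prod D (chain_min A D)"
    and i: "i < length D"
  defines "P j \<equiv> chain_prod (take j D) (chain_min A D)"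
  shows "P i \<in> supt (D!i)" "TP \<inter> {left_tp (D!i)<..<P i} = {}"
    "TP \<inter> {(D!i) (P i)<..<right_tp (D!i)} = {}"
proof -
  define n where "n = length D"
  define mn where "mn = chain_min A D"
  define mx where "mx = chain_max A D"
  have DA: "\<And>j. j < n \<Longrightarrow> D!j \<in> A" using chain_A[OF Ds] n_def by auto
  have PS: "\<And>j. j < n \<Longrightarrow> P (Suc j) = (D!j) (P j)" using chain_prod_Suc P_def n_def by simp
  have P0: "P 0 = mn" using chain_prod_0 P_def mn_def by simp
  have Pn: "P n = chain_prod D mn" using P_def n_def mn_def by simp
  have Hn: "mx \<le> P n" using H Pn mn_def mx_def by simp
  have stay: "P (j + d) = P j" if "j < n" "P j \<le> left_tp (D!j)" "j + d \<le> n" for j d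
    using that(3)
  proof (induction d)
    case 0 then show ?case by simp
  next
    case (Suc d)
    have "P (j + Suc d) = (D!(j+d)) (P (j + d))" using PS[of "j+d"] Suc.prems by simp
    also have "\<dots> = (D!(j+d)) (P j)" using Suc by simp
    also have "\<dots> = P j"
    proof (rule fix_below)
      show "D!(j+d) \<in> A" using DA Suc.prems by simp
      show "P j \<le> left_tp (D!(j+d))" using that(2) chain_le[OF Ds, of j "j+d"] Suc.prems n_def by auto
    qed
    finally show ?case .
  qed
  have low: "left_tp (D!Suc j) < P (Suc j)" if j: "Suc j < n" for j
  proof (rule ccontr)
    assume c: "\<not> ?thesis"
    have "P (Suc j + (n - Suc j)) = P (Suc j)" using stay[of "Suc j" "n - Suc j"] c j by auto
    then have "P n = P (Suc j)" using j by simp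
    moreover have "left_tp (D!Suc j) < right_tp (D!j)" using chain_step[OF Ds, of j] j n_def by auto
    moreover have "right_tp (D!j) \<in> SC D"
      using SC_iff chain_step[OF Ds, of j] j n_def supt_iff[OF DA[of "Suc j"]] RT[OF DA[of j]] by auto
    then have "right_tp (D!j) \<le> mx" using cmax[OF Ds] mx_def by auto
    ultimately show False using c Hn by auto
  qed
  have mn_s: "mn \<in> supt (D!0)" using cmin_first(1)[OF Ds] mn_def by auto
  have ins: "P j \<in> supt (D!j)" if "j < n" for j
    using that
  proof (induction j)
    case 0 then show ?case using P0 mn_s by simp
  next
    case (Suc j)
    have "P (Suc j) < right_tp (D!j)" using PS img_lt DA Suc by auto
    moreover have "right_tp (D!j) < right_tp (D!Suc j)" using chain_step[OF Ds, of j] Suc.prems n_def by auto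
    ultimately show ?case using low[OF Suc.prems] supt_iff DA[OF Suc.prems] by auto
  qed
  show "P i \<in> supt (D!i)" using ins i n_def by simp
  show "TP \<inter> {left_tp (D!i)<..<P i} = {}"
  proof (cases i)
    case 0
    show ?thesis
    proof (rule ccontr)
      assume "\<not> ?thesis"
      then obtain p where p: "p \<in> TP" "left_tp (D!0) < p" "p < mn" using 0 P0 by auto
      have "p \<in> supt (D!0)" using p mn_s supt_iff DA i n_def 0 by auto
      then show False using cmin_first(2)[OF Ds, of p] p mn_def by auto
    qed
  next
    case (Suc i')
    have "P i < right_tp (D!i')" using PS img_lt DA ins Suc i n_def by auto
    then show ?thesis using chain_step(4)[OF Ds, of i'] Suc i by auto
  qed
  show "TP \<inter> {(D!i) (P i)<..<right_tp (D!i)} = {}"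
  proof (cases "Suc i < n")
    case True
    have "(D!i) (P i) = P (Suc i)" using PS True by simp
    then show ?thesis using low[OF True] chain_step(4)[OF Ds, of i] True n_def by auto
  next
    case False
    then have ni: "Suc i = n" using i n_def by simp
    show ?thesis
    proof (rule ccontr)
      assume "\<not> ?thesis"
      then obtain p where p: "p \<in> TP" "(D!i) (P i) < p" "p < right_tp (D!i)" by auto
      have Pi: "P i \<in> supt (D!i)" using ins i n_def by simp
      have "P i < (D!i) (P i)" using bf(3) Pi DA i n_def by auto
      then have "p \<in> supt (D!i)" using p Pi supt_iff DA i n_def by auto
      then have "p \<in> SC D" using SC_iff p i by auto
      then have "p \<le> mx" using cmax[OF Ds] mx_def by auto
      moreover have "(D!i) (P i) = P n" using PS[of i] ni i n_def by simp
      ultimately show False using Hn p by auto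
    qed
  qed
qed


definition DI :: "(real \<Rightarrow> real) \<Rightarrow> (real \<Rightarrow> real) list \<times> nat" where
  "DI a = (SOME p. max_stretched_chain A (fst p) \<and> snd p < length (fst p) \<and> fst p ! snd p = a)"

definition mk :: "(real \<Rightarrow> real) \<Rightarrow> real" where
  "mk a = (if isolated A a then (left_tp a + right_tp a) / 2
           else chain_prod (take (snd (DI a)) (fst (DI a))) (chain_min A (fst (DI a))))"

lemma DI_ok:
  assumes "a \<in> A" "\<not> isolated A a"
  shows "max_stretched_chain A (fst (DI a)) \<and> snd (DI a) < length (fst (DI a)) \<and> fst (DI a) ! snd (DI a) = a"
proof -
  obtain D where D: "max_stretched_chain A D" "a \<in> set D" using exists_max assms by blast
  then obtain i where "i < length D" "D!i = a" by (auto simp: in_set_conv_nth)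
  then have "\<exists>p. max_stretched_chain A (fst p) \<and> snd p < length (fst p) \<and> fst p ! snd p = a"
    using D by (intro exI[of _ "(D, i)"]) auto
  then show ?thesis unfolding DI_def by (rule someI_ex)
qed

lemma mk_props:
  assumes H: "\<forall>C. max_stretched_chain A C \<longrightarrow> chain_max A C \<le> chain_prod C (chain_min A C)"
    and a: "a \<in> A"
  shows "mk a \<in> supt a" "TP \<inter> {left_tp a<..<mk a} = {}" "TP \<inter> {a (mk a)<..<right_tp a} = {}"
proof -
  have "mk a \<in> supt a \<and> TP \<inter> {left_tp a<..<mk a} = {} \<and> TP \<inter> {a (mk a)<..<right_tp a} = {}"
  proof (cases "isolated A a")
    case True
    have m: "mk a = (left_tp a + right_tp a) / 2" unfolding mk_def using True by simp
    have l2a: "left_tp a < (left_tp a + right_tp a) / 2" using bf(2)[OF a] by (simp add: field_simps)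
    have l2b: "(left_tp a + right_tp a) / 2 < right_tp a" using bf(2)[OF a] by (simp add: field_simps)
    note l2 = l2a l2b
    have ms: "mk a \<in> supt a" unfolding supt_iff[OF a] m using l2 by simp
    have u1: "a (mk a) < right_tp a" by (rule img_lt[OF a ms])
    have u2: "mk a < a (mk a)" by (rule bf(3)[OF a ms])
    have s1: "{left_tp a<..<mk a} \<subseteq> supt a" unfolding bf(1)[OF a] using l2 m by auto
    have s2: "{a (mk a)<..<right_tp a} \<subseteq> supt a" unfolding bf(1)[OF a] using l2 m u2 by auto
    have e: "TP \<inter> supt a = {}" using True unfolding isolated_def by blast
    have "TP \<inter> {left_tp a<..<mk a} = {}" using s1 e by blast
    moreover have "TP \<inter> {a (mk a)<..<right_tp a} = {}" using s2 e by blast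
    ultimately show ?thesis using ms by simp
  next
    case False
    define D where "D = fst (DI a)"
    define i where "i = snd (DI a)"
    have ok: "max_stretched_chain A D" "i < length D" "D!i = a" using DI_ok[OF a False] D_def i_def by auto
    have Ds: "stretched_chain A D" using ok max_stretched_chain_def by auto
    have m: "mk a = chain_prod (take i D) (chain_min A D)" using mk_def False D_def i_def by simp
    have Hc: "chain_max A D \<le> chain_prod D (chain_min A D)" using H ok(1) by blast
    note mp = max_props[OF Ds Hc ok(2)]
    show ?thesis using mp unfolding m[symmetric] ok(3) by blast
  qed
  then show "mk a \<in> supt a" "TP \<inter> {left_tp a<..<mk a} = {}" "TP \<inter> {a (mk a)<..<right_tp a} = {}" by auto
qed


lemma mk_pred:
  assumes a: "a \<in> A" and b: "b \<in> A" and p: "predr b a"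
  shows "mk a \<le> b (mk b)"
proof -
  have nia: "\<not> isolated A a"
  proof -
    have "right_tp b \<in> supt a \<inter> TP" using p supt_iff[OF a] RT[OF b] predr_def by auto
    then show ?thesis unfolding isolated_def by auto
  qed
  have nib: "\<not> isolated A b"
  proof -
    have "left_tp a \<in> supt b \<inter> TP" using p supt_iff[OF b] LT[OF a] predr_def by auto
    then show ?thesis unfolding isolated_def by auto
  qed
  define D where "D = fst (DI a)"
  define i where "i = snd (DI a)"
  have ok: "max_stretched_chain A D" "i < length D" "D!i = a" using DI_ok[OF a nia] D_def i_def by auto
  have Ds: "stretched_chain A D" using ok max_stretched_chain_def by auto
  define D' where "D' = fst (DI b)"
  define j where "j = snd (DI b)"
  have ok': "max_stretched_chain A D'" "j < length D'" "D'!j = b" using DI_ok[OF b nib] D'_def j_def by auto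
  have "i \<noteq> 0"
  proof
    assume "i = 0"
    then have "predr b (D!0)" using p ok by simp
    then show False using max_first[OF ok(1) b] by simp
  qed
  then obtain i' where i': "i = Suc i'" by (cases i) auto
  have "D!i' = b"
    using pred_unique[OF a chain_A[OF Ds, of i'] b] chain_pred[OF Ds, of i'] ok i' p by auto
  then have ag: "i' = j" "take (Suc i') D = take (Suc j) D'" using agree[OF ok(1) ok'(1), of i' j] ok ok' i' by auto
  have "take i' (take (Suc i') D) = take j (take (Suc j) D')" using ag by simp
  then have tk: "take i' D = take j D'" by (simp add: min_def)
  have "take (Suc i') D ! 0 = take (Suc j) D' ! 0" using ag by simp
  then have d0: "D!0 = D'!0" by simp
  have Ds': "stretched_chain A D'" using ok' max_stretched_chain_def by auto
  have c1: "chain_min A D \<in> supt (D!0) \<inter> TP" "chain_min A D' \<in> supt (D!0) \<inter> TP"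
    using cmin_first(1)[OF Ds] cmin_first(1)[OF Ds'] d0 by auto
  have "chain_min A D \<le> chain_min A D'" using cmin_first(2)[OF Ds c1(2)] .
  moreover have "chain_min A D' \<le> chain_min A D" using cmin_first(2)[OF Ds'] c1(1) d0 by simp
  ultimately have cm: "chain_min A D = chain_min A D'" by simp
  have "mk a = chain_prod (take i D) (chain_min A D)" using mk_def nia D_def i_def by simp
  also have "\<dots> = (D!i') (chain_prod (take i' D) (chain_min A D))" using chain_prod_Suc ok i' by simp
  also have "\<dots> = b (mk b)" using mk_def nib D'_def j_def tk cm \<open>D!i' = b\<close> by simp
  finally show ?thesis by simp
qed

lemma chain_fast:
  assumes H: "\<forall>C. max_stretched_chain A C \<longrightarrow> chain_max A C \<le> chain_prod C (chain_min A C)"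
  shows "geom_fast A"
  unfolding geom_fast_def
proof (intro conjI exI[of _ mk] ballI)
  show "geom_proper A" by (rule gp)
  note mp = mk_props[OF H]
  fix a assume a: "a \<in> A"
  show "mk a \<in> supt a" using mp a by simp
  fix b assume b: "b \<in> A"
  have ma: "left_tp a < mk a" "mk a < a (mk a)" "a (mk a) < right_tp a"
    using mp(1)[OF a] supt_iff[OF a] bf(3)[OF a] img_lt[OF a] by auto
  have mb: "left_tp b < mk b" "mk b < b (mk b)" "b (mk b) < right_tp b"
    using mp(1)[OF b] supt_iff[OF b] bf(3)[OF b] img_lt[OF b] by auto
  show "left_foot mk a \<inter> right_foot mk b = {}"
  proof (cases "a = b")
    case True then show ?thesis unfolding left_foot_def right_foot_def using ma by auto
  next
    case False
    have ne: "left_tp a \<noteq> left_tp b" "right_tp a \<noteq> right_tp b" using False gp a b geom_proper_def by blast+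
    have pr: "mk a \<le> b (mk b)" if "left_tp b < left_tp a" "left_tp a < right_tp b" "right_tp b < right_tp a"
      "TP \<inter> {left_tp a<..<right_tp b} = {}"
      using mk_pred[OF a b] that unfolding predr_def by blast
    show ?thesis unfolding left_foot_def right_foot_def
      by (rule disj_LR[OF ma(1) ma(2) ma(3) mb(1) mb(2) mb(3) LT[OF a] RT[OF a] LT[OF b] RT[OF b]
          mp(2)[OF a] mp(3)[OF b] pr ne])
  qed
  show "a \<noteq> b \<longrightarrow> left_foot mk a \<inter> left_foot mk b = {}"
  proof
    assume "a \<noteq> b"
    then have ne: "left_tp a \<noteq> left_tp b" using gp a b geom_proper_def by blast
    show "left_foot mk a \<inter> left_foot mk b = {}" unfolding left_foot_def
      by (rule disj_LL[OF ne ma(1) mb(1) mp(2)[OF a] mp(2)[OF b] LT[OF a] LT[OF b]])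
  qed
  show "a \<noteq> b \<longrightarrow> right_foot mk a \<inter> right_foot mk b = {}"
  proof
    assume "a \<noteq> b"
    then have ne: "right_tp a \<noteq> right_tp b" using gp a b geom_proper_def by blast
    show "right_foot mk a \<inter> right_foot mk b = {}" unfolding right_foot_def
      by (rule disj_RR[OF ne ma(3) mb(3) mp(3)[OF a] mp(3)[OF b] RT[OF a] RT[OF b]])
  qed
qed

end

theorem proposition4p2:
  fixes A :: "(real \<Rightarrow> real) set"
  assumes "finite A"
    and "\<forall>a\<in>A. positive_bump a"
    and "geom_proper A"
  shows "(geom_fast A \<longleftrightarrow>
            (\<forall>C. stretched_chain A C \<longrightarrow> chain_max A C \<le> chain_prod C (chain_min A C)))
       \<and> (geom_fast A \<longleftrightarrow>
            (\<forall>C. max_stretched_chain A C \<longrightarrow> chain_max A C \<le> chain_prod C (chain_min A C)))"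
proof -
  interpret bumps A using assms by unfold_locales
  have 12: "geom_fast A \<Longrightarrow> (\<forall>C. stretched_chain A C \<longrightarrow> chain_max A C \<le> chain_prod C (chain_min A C))"
  proof -
    assume "geom_fast A"
    then obtain m where m: "\<forall>a\<in>A. m a \<in> supt a" "\<forall>a\<in>A. \<forall>b\<in>A.
           left_foot m a \<inter> right_foot m b = {} \<and>
           (a \<noteq> b \<longrightarrow> left_foot m a \<inter> left_foot m b = {}) \<and>
           (a \<noteq> b \<longrightarrow> right_foot m a \<inter> right_foot m b = {})" unfolding geom_fast_def by blast
    show ?thesis using fast_chain[OF m] by blast
  qed
  have 23: "(\<forall>C. stretched_chain A C \<longrightarrow> chain_max A C \<le> chain_prod C (chain_min A C)) \<Longrightarrow>
      (\<forall>C. max_stretched_chain A C \<longrightarrow> chain_max A C \<le> chain_prod C (chain_min A C))"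
    unfolding max_stretched_chain_def by blast
  have 31: "(\<forall>C. max_stretched_chain A C \<longrightarrow> chain_max A C \<le> chain_prod C (chain_min A C)) \<Longrightarrow> geom_fast A"
    by (rule chain_fast)
  show ?thesis using 12 23 31 by blast
qed

end
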